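(* Let $f:\mathbb{R}^d\to\mathbb{R}$ be differentiable, bounded below by some $f^*$, with $L$-Lipschitz continuous gradient $\nabla f$. Let $\{x_t\}$ be generated by the SUM iteration with $\mu\in[0,1)$, $\lambda\in[0,1/(1-\mu)]$, and positive step sizes $\{\eta_t\}$ satisfying $\sum_{t=1}^\infty\eta_t=\infty$, $\sum_{t=1}^\infty\eta_t^2<\infty$ and $\lim_{t\to\infty}\eta_{t-1}/\eta_t=1$. Assume the noisy gradients satisfy $\mathbb{E}_t[g_t]=\nabla f(x_t)$ and $\mathbb{E}\|g_t\|^2\le G^2$ for all $t$. Then $$\lim_{t\to\infty}\mathbb{E}\|\nabla f(x_t)\|=0\qquad\text{and}\qquad \lim_{t\to\infty}\mathbb{E}[f(x_t)]=F^*$$ for some finite constant $F^*$.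
   Context: Stochastic unified momentum (SUM) iteration: given $x_1\in\mathbb{R}^d$, set $m_0=0$ and for $t=1,2,\dots$ $$m_t=\mu m_{t-1}-\eta_t g_t,\qquad x_{t+1}=x_t-\lambda\eta_t g_t+(1-\tilde\lambda)m_t,\qquad \tilde\lambda:=(1-\mu)\lambda,$$ where $g_t\in\mathbb{R}^d$ is a random vector (noisy gradient). $\mathbb{E}_t[\cdot]$ denotes the conditional expectation given $g_1,\dots,g_{t-1}$ (so $x_t$ and $m_{t-1}$ are determined by the conditioning), and $\mathbb{E}$ the total expectation. Norms are Euclidean. ($\lambda=0$ gives stochastic heavy ball, $\lambda=1$ stochastic Nesterov accelerated gradient.) *)

theory Defs
  imports "HOL-Probability.Probability"
begin

text \<open>One realization of the SUM recursion. sum_xm mu lam eta x1 g t = (x_(t+1), m_t),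
  with x_1 = x1, m_0 = 0, and steps indexed from 1.\<close>
primrec sum_xm :: "real \<Rightarrow> real \<Rightarrow> (nat \<Rightarrow> real) \<Rightarrow> 'v::real_vector \<Rightarrow> (nat \<Rightarrow> 'v) \<Rightarrow> nat \<Rightarrow> 'v \<times> 'v" where
  "sum_xm mu lam eta x1 g 0 = (x1, 0)"
| "sum_xm mu lam eta x1 g (Suc t) =
     (let xm = sum_xm mu lam eta x1 g t;
          m' = mu *\<^sub>R snd xm - eta (Suc t) *\<^sub>R g (Suc t);
          x' = fst xm - (lam * eta (Suc t)) *\<^sub>R g (Suc t) + (1 - (1 - mu) * lam) *\<^sub>R m'
      in (x', m'))"

text \<open>The iterate x_t (t >= 1); for t = 0 it returns x_1 (irrelevant).\<close>
definition sum_x :: "real \<Rightarrow> real \<Rightarrow> (nat \<Rightarrow> real) \<Rightarrow> 'v::real_vector \<Rightarrow> (nat \<Rightarrow> 'v) \<Rightarrow> nat \<Rightarrow> 'v" where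
  "sum_x mu lam eta x1 g t = fst (sum_xm mu lam eta x1 g (t - 1))"

definition hist :: "'a measure \<Rightarrow> (nat \<Rightarrow> 'a \<Rightarrow> 'v::topological_space) \<Rightarrow> nat \<Rightarrow> 'a measure" where
  "hist M g t = sigma (space M) {g i -` A \<inter> space M | i A. i \<in> {1..<t} \<and> A \<in> sets borel}"

end

theory Submission
  imports Defs
begin


lemma descent_aux:
  fixes f :: "'v::euclidean_space \<Rightarrow> real"
  assumes grad: "\<And>x. (f has_derivative (\<lambda>h. f' x \<bullet> h)) (at x)"
    and lip: "\<And>x y. norm (f' x - f' y) \<le> K * norm (x - y)"
  shows "\<bar>f y - f x - f' x \<bullet> (y - x)\<bar> \<le> K / 2 * (norm (y - x))\<^sup>2"
proof -
  define d where "d = y - x"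
  have D: "((\<lambda>s. f (x + s *\<^sub>R d)) has_real_derivative (f' (x + s *\<^sub>R d) \<bullet> d)) (at s)" for s
  proof -
    have "((\<lambda>s. x + s *\<^sub>R d) has_derivative (\<lambda>h. h *\<^sub>R d)) (at s)"
      by (auto intro!: derivative_eq_intros)
    from has_derivative_compose[OF this grad]
    have "((\<lambda>s. f (x + s *\<^sub>R d)) has_derivative (\<lambda>h. f' (x + s *\<^sub>R d) \<bullet> (h *\<^sub>R d))) (at s)" .
    then show ?thesis
      by (simp add: has_real_derivative_iff_has_vector_derivative has_vector_derivative_def mult.commute)
  qed
  have ip: "\<bar>(f' (x + s *\<^sub>R d) - f' x) \<bullet> d\<bar> \<le> K * s * (norm d)\<^sup>2" if "s \<ge> 0" for s
  proof -
    have "\<bar>(f' (x + s *\<^sub>R d) - f' x) \<bullet> d\<bar> \<le> norm (f' (x + s *\<^sub>R d) - f' x) * norm d"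
      by (rule Cauchy_Schwarz_ineq2)
    also have "\<dots> \<le> K * norm (s *\<^sub>R d) * norm d"
      using lip[of "x + s *\<^sub>R d" x] by (simp add: mult_right_mono)
    finally show ?thesis using that by (simp add: power2_eq_square mult.assoc)
  qed
  define p where "p = (\<lambda>s. f (x + s *\<^sub>R d) - s * (f' x \<bullet> d) - K / 2 * s\<^sup>2 * (norm d)\<^sup>2)"
  define q where "q = (\<lambda>s. f (x + s *\<^sub>R d) - s * (f' x \<bullet> d) + K / 2 * s\<^sup>2 * (norm d)\<^sup>2)"
  have Dp: "(p has_real_derivative (f' (x + s *\<^sub>R d) \<bullet> d - f' x \<bullet> d - K * s * (norm d)\<^sup>2)) (at s)" for s
    unfolding p_def by (rule derivative_eq_intros D refl | simp)+
  have Dq: "(q has_real_derivative (f' (x + s *\<^sub>R d) \<bullet> d - f' x \<bullet> d + K * s * (norm d)\<^sup>2)) (at s)" for s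
    unfolding q_def by (rule derivative_eq_intros D refl | simp)+
  obtain z where z: "0 < z" "z < 1" "p 1 - p 0 = (1 - 0) * (f' (x + z *\<^sub>R d) \<bullet> d - f' x \<bullet> d - K * z * (norm d)\<^sup>2)"
    using MVT2[of 0 1 p "\<lambda>s. f' (x + s *\<^sub>R d) \<bullet> d - f' x \<bullet> d - K * s * (norm d)\<^sup>2"] Dp by auto
  obtain w where w: "0 < w" "w < 1" "q 1 - q 0 = (1 - 0) * (f' (x + w *\<^sub>R d) \<bullet> d - f' x \<bullet> d + K * w * (norm d)\<^sup>2)"
    using MVT2[of 0 1 q "\<lambda>s. f' (x + s *\<^sub>R d) \<bullet> d - f' x \<bullet> d + K * s * (norm d)\<^sup>2"] Dq by auto
  have "p 1 \<le> p 0" using z ip[of z] by (simp add: inner_diff_left)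
  moreover have "q 1 \<ge> q 0" using w ip[of w] by (simp add: inner_diff_left)
  ultimately have "f y - f x - f' x \<bullet> (y - x) \<le> K / 2 * (norm (y - x))\<^sup>2 \<and> -(f y - f x - f' x \<bullet> (y - x)) \<le> K / 2 * (norm (y - x))\<^sup>2" unfolding p_def q_def d_def by simp
  then show ?thesis by (simp only: abs_le_iff)
qed




lemma seq_to_zero:
  fixes u e :: "nat \<Rightarrow> real"
  assumes epos: "\<And>k. e k > 0" and ediv: "\<not> summable e"
    and sm: "summable (\<lambda>k. e k * (u k)\<^sup>2)" and upos: "\<And>k. u k \<ge> 0"
    and C: "C > 0" and diff: "\<And>k. \<bar>u (Suc k) - u k\<bar> \<le> C * e k"
  shows "u \<longlonglongrightarrow> 0"
proof (rule LIMSEQ_I)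
  fix r :: real assume r: "r > 0"
  define d where "d = r / 2"
  have d: "d > 0" using r by (simp add: d_def)
  obtain N where N: "\<And>m n. m \<ge> N \<Longrightarrow> norm (\<Sum>k=m..n. e k * (u k)\<^sup>2) < d^3 / C"
    using summable_partial_sum_bound[OF sm, of "d^3 / C"] d C by auto
  have "u k < 2 * d" if k: "k \<ge> N" for k
  proof (rule ccontr)
    assume "\<not> u k < 2 * d"
    hence uk: "u k \<ge> 2 * d" by simp
    have ex: "\<exists>j. j \<ge> k \<and> u j < d"
    proof (rule ccontr)
      assume "\<not> ?thesis"
      hence ge: "\<And>j. j \<ge> k \<Longrightarrow> u j \<ge> d" by force
      have "summable (\<lambda>j. e (j + k))"
      proof (rule summable_comparison_test')
        show "summable (\<lambda>j. e (j + k) * (u (j + k))\<^sup>2 / d\<^sup>2)"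
          using summable_ignore_initial_segment[OF sm, of k] by (intro summable_divide)
        fix j :: nat
        have "d\<^sup>2 \<le> (u (j + k))\<^sup>2" using ge[of "j+k"] d by (intro power_mono) auto
        hence "e (j + k) * d\<^sup>2 \<le> e (j + k) * (u (j + k))\<^sup>2"
          using epos[of "j+k"] by (intro mult_left_mono) auto
        thus "norm (e (j + k)) \<le> e (j + k) * (u (j + k))\<^sup>2 / d\<^sup>2"
          using epos[of "j+k"] d by (simp add: field_simps)
      qed
      hence "summable e" using summable_ignore_initial_segment summable_iff_shift by blast
      thus False using ediv by simp
    qed
    define j where "j = (LEAST j. j \<ge> k \<and> u j < d)"
    have j: "j \<ge> k" "u j < d" using LeastI_ex[OF ex] unfolding j_def by auto
    have jmin: "u i \<ge> d" if "k \<le> i" "i < j" for i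
      using not_less_Least[of i "\<lambda>j. j \<ge> k \<and> u j < d"] that unfolding j_def by force
    have jk: "j > k" using j uk d by (cases "j = k") auto
    have "u k - u j = (\<Sum>i = k..<j. u i - u (Suc i))"
      using sum_Suc_diff'[of k j "\<lambda>i. - u i"] jk by simp
    also have "\<dots> \<le> (\<Sum>i = k..<j. C * e i)"
      by (intro sum_mono) (use diff in \<open>force simp: abs_le_iff\<close>)
    finally have "d \<le> C * (\<Sum>i = k..<j. e i)" using uk j by (simp add: sum_distrib_left)
    hence "d^3 / C \<le> d\<^sup>2 * (\<Sum>i = k..<j. e i)" using C d
      by (simp add: field_simps power3_eq_cube power2_eq_square)
    also have "\<dots> = (\<Sum>i = k..<j. e i * d\<^sup>2)" by (simp add: sum_distrib_right mult.commute)
    also have "\<dots> \<le> (\<Sum>i = k..<j. e i * (u i)\<^sup>2)"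
    proof (intro sum_mono mult_left_mono)
      fix i assume "i \<in> {k..<j}"
      thus "d\<^sup>2 \<le> (u i)\<^sup>2" using jmin[of i] d by (intro power_mono) auto
    qed (use epos less_imp_le in auto)
    also have "\<dots> = (\<Sum>i = k..(j - 1). e i * (u i)\<^sup>2)"
      using jk by (intro sum.cong) auto
    also have "\<dots> < d^3 / C"
      using N[OF k, of "j - 1"] by (simp add: sum_nonneg epos less_imp_le)
    finally show False by simp
  qed
  thus "\<exists>no. \<forall>n\<ge>no. norm (u n - 0) < r"
    using upos by (auto simp: d_def)
qed

lemma almost_dec_convergent:
  fixes a r :: "nat \<Rightarrow> real"
  assumes step: "\<And>k. a (Suc k) \<le> a k + r k" and rpos: "\<And>k. r k \<ge> 0"
    and rs: "summable r" and lb: "\<And>k. lb \<le> a k"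
  shows "convergent a"
proof -
  define b where "b = (\<lambda>k. a k - (\<Sum>i<k. r i))"
  have "decseq b" unfolding b_def
    by (rule decseq_SucI) (use step in \<open>simp add: algebra_simps\<close>)
  moreover have "\<forall>i. lb - suminf r \<le> b i"
  proof
    fix i
    have "(\<Sum>i<i. r i) \<le> suminf r" using rs rpos by (intro sum_le_suminf) auto
    thus "lb - suminf r \<le> b i" unfolding b_def using lb[of i] by linarith
  qed
  ultimately obtain l where "b \<longlonglongrightarrow> l" using decseq_convergent by blast
  hence "(\<lambda>k. b k + (\<Sum>i<k. r i)) \<longlonglongrightarrow> l + suminf r"
    by (intro tendsto_add summable_LIMSEQ rs)
  thus ?thesis unfolding b_def convergent_def by auto
qed


lemma tele_summable:
  fixes a w r :: "nat \<Rightarrow> real"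
  assumes step: "\<And>k. a (Suc k) \<le> a k - w k + r k" and wpos: "\<And>k. w k \<ge> 0"
    and rpos: "\<And>k. r k \<ge> 0" and rs: "summable r" and lb: "\<And>k. lb \<le> a k"
  shows "summable w" "convergent a"
proof -
  have part: "(\<Sum>k\<le>n. w k) \<le> a 0 - a (Suc n) + (\<Sum>k\<le>n. r k)" for n
  proof (induction n)
    case 0 thus ?case using step[of 0] by simp
  next
    case (Suc n) thus ?case using step[of "Suc n"] by simp
  qed
  have "(\<Sum>k\<le>n. w k) \<le> a 0 - lb + suminf r" for n
  proof -
    have "(\<Sum>k\<le>n. r k) \<le> suminf r" using rs rpos by (intro sum_le_suminf) auto
    thus ?thesis using part[of n] lb[of "Suc n"] by linarith
  qed
  thus "summable w" by (rule bounded_imp_summable[OF wpos])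
  show "convergent a"
  proof (rule almost_dec_convergent[of a r lb])
    fix k show "a (Suc k) \<le> a k + r k" using step[of k] wpos[of k] by linarith
  qed (use rpos rs lb in auto)
qed

lemma rec_summable:
  fixes V b :: "nat \<Rightarrow> real"
  assumes step: "\<And>k. V (Suc k) \<le> mu * V k + b k" and Vpos: "\<And>k. V k \<ge> 0"
    and mu: "0 \<le> mu" "mu < 1" and bpos: "\<And>k. b k \<ge> 0" and bs: "summable b"
  shows "summable V"
proof -
  have "summable (\<lambda>k. (1 - mu) * V k)"
  proof (rule tele_summable(1)[of V _ b 0])
    fix k show "V (Suc k) \<le> V k - (1 - mu) * V k + b k" using step[of k] by (simp add: algebra_simps)
    show "0 \<le> (1 - mu) * V k" using Vpos[of k] mu by simp
  qed (use Vpos bpos bs in auto)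
  hence "summable (\<lambda>k. (1 - mu) * V k / (1 - mu))" by (rule summable_divide)
  thus ?thesis using mu by simp
qed




lemma hist_space: "space (hist M g t) = space M"
  unfolding hist_def by (rule space_measure_of) auto

lemma hist_sub:
  assumes gm: "\<And>i. 1 \<le> i \<Longrightarrow> i < t \<Longrightarrow> g i \<in> borel_measurable M"
  shows "subalgebra M (hist M g t)"
  unfolding subalgebra_def
proof
  show "space (hist M g t) = space M" by (rule hist_space)
  have "sets (hist M g t) = sigma_sets (space M) {g i -` A \<inter> space M | i A. i \<in> {1..<t} \<and> A \<in> sets borel}"
    unfolding hist_def by (rule sets_measure_of) auto
  also have "\<dots> \<subseteq> sets M"
    by (rule sets.sigma_sets_subset) (use gm in \<open>auto intro: measurable_sets\<close>)
  finally show "sets (hist M g t) \<subseteq> sets M" .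
qed

lemma hist_meas:
  assumes "1 \<le> i" "i < t"
  shows "g i \<in> borel_measurable (hist M g t)"
proof (rule measurableI)
  fix A :: "'b set" assume "A \<in> sets borel"
  hence "g i -` A \<inter> space M \<in> sets (hist M g t)"
  proof -
    have "sets (hist M g t) = sigma_sets (space M) {g i -` A \<inter> space M | i A. i \<in> {1..<t} \<and> A \<in> sets borel}"
      unfolding hist_def by (rule sets_measure_of) auto
    moreover have "g i -` A \<inter> space M \<in> sigma_sets (space M) {g i -` A \<inter> space M | i A. i \<in> {1..<t} \<and> A \<in> sets borel}"
      using assms \<open>A \<in> sets borel\<close> by (intro sigma_sets.Basic) auto
    ultimately show ?thesis by simp
  qed
  then show "g i -` A \<inter> space (hist M g t) \<in> sets (hist M g t)" by (simp add: hist_space)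
qed auto




definition sqi :: "'a measure \<Rightarrow> ('a \<Rightarrow> 'b::euclidean_space) \<Rightarrow> bool" where
  "sqi M Y \<longleftrightarrow> Y \<in> borel_measurable M \<and> integrable M (\<lambda>\<omega>. (norm (Y \<omega>))\<^sup>2)"

lemma sq_sum_le: "((a::real) + b)\<^sup>2 \<le> 2 * a\<^sup>2 + 2 * b\<^sup>2"
  using sum_squares_ge_zero[of "a - b" 0] by (simp add: power2_eq_square algebra_simps)

lemma prod_le_sq: "(a::real) * b \<le> a\<^sup>2 / 2 + b\<^sup>2 / 2"
  using zero_le_power2[of "a - b"] by (simp add: power2_eq_square algebra_simps)

lemma int_bound:
  fixes Z F :: "'a \<Rightarrow> real"
  assumes "integrable M F" "Z \<in> borel_measurable M" "\<And>\<omega>. \<bar>Z \<omega>\<bar> \<le> F \<omega>"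
  shows "integrable M Z"
proof (rule Bochner_Integration.integrable_bound[OF assms(1,2)])
  show "AE x in M. norm (Z x) \<le> norm (F x)" using assms(3)
    by (intro AE_I2) (smt (verit) real_norm_def)
qed

context prob_space begin

lemma sqiD: "sqi M Y \<Longrightarrow> Y \<in> borel_measurable M" "sqi M Y \<Longrightarrow> integrable M (\<lambda>\<omega>. (norm (Y \<omega>))\<^sup>2)"
  unfolding sqi_def by auto

lemma sqi_bound:
  assumes "sqi M Y" "Z \<in> borel_measurable M" "\<And>\<omega>. norm (Z \<omega>) \<le> A * norm (Y \<omega>) + B" "A \<ge> 0"
  shows "sqi M Z"
proof -
  have "integrable M (\<lambda>\<omega>. 2 * A\<^sup>2 * (norm (Y \<omega>))\<^sup>2 + 2 * B\<^sup>2)"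
    using sqiD(2)[OF assms(1)] by auto
  moreover have "\<bar>(norm (Z \<omega>))\<^sup>2\<bar> \<le> 2 * A\<^sup>2 * (norm (Y \<omega>))\<^sup>2 + 2 * B\<^sup>2" for \<omega>
  proof -
    have z0: "0 \<le> norm (Z \<omega>)" by simp
    have "(norm (Z \<omega>))\<^sup>2 \<le> (A * norm (Y \<omega>) + B)\<^sup>2"
      using assms(3)[of \<omega>] z0 by (meson power_mono)
    also have "\<dots> \<le> 2 * A\<^sup>2 * (norm (Y \<omega>))\<^sup>2 + 2 * B\<^sup>2"
      using sq_sum_le[of "A * norm (Y \<omega>)" B] by (simp add: power_mult_distrib)
    finally show ?thesis by simp
  qed
  ultimately show ?thesis unfolding sqi_def
    using assms(2) by (auto intro: int_bound)
qed

lemma sqi_add: "sqi M Y \<Longrightarrow> sqi M Z \<Longrightarrow> sqi M (\<lambda>\<omega>. Y \<omega> + Z \<omega>)"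
proof -
  assume y: "sqi M Y" and z: "sqi M Z"
  have "integrable M (\<lambda>\<omega>. 2 * (norm (Y \<omega>))\<^sup>2 + 2 * (norm (Z \<omega>))\<^sup>2)"
    using sqiD(2)[OF y] sqiD(2)[OF z] by auto
  moreover have "\<bar>(norm (Y \<omega> + Z \<omega>))\<^sup>2\<bar> \<le> 2 * (norm (Y \<omega>))\<^sup>2 + 2 * (norm (Z \<omega>))\<^sup>2" for \<omega>
  proof -
    have "(norm (Y \<omega> + Z \<omega>))\<^sup>2 \<le> (norm (Y \<omega>) + norm (Z \<omega>))\<^sup>2"
      by (intro power_mono norm_triangle_ineq) simp
    also have "\<dots> \<le> 2 * (norm (Y \<omega>))\<^sup>2 + 2 * (norm (Z \<omega>))\<^sup>2" by (rule sq_sum_le)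
    finally show ?thesis by simp
  qed
  moreover have "(\<lambda>\<omega>. Y \<omega> + Z \<omega>) \<in> borel_measurable M" using sqiD(1)[OF y] sqiD(1)[OF z] by measurable
  ultimately show ?thesis unfolding sqi_def by (auto intro: int_bound)
qed

lemma sqi_scale: "sqi M Y \<Longrightarrow> sqi M (\<lambda>\<omega>. c *\<^sub>R Y \<omega>)"
  by (rule sqi_bound[where A="\<bar>c\<bar>" and B=0]) (auto simp: sqi_def)

lemma sqi_diff: "sqi M Y \<Longrightarrow> sqi M Z \<Longrightarrow> sqi M (\<lambda>\<omega>. Y \<omega> - Z \<omega>)"
  using sqi_add[of Y "\<lambda>\<omega>. (-1) *\<^sub>R Z \<omega>"] sqi_scale[of Z "-1"] by simp

lemma sqi_const: "sqi M (\<lambda>\<omega>. c)"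
  unfolding sqi_def by auto

lemma sqi_norm: "sqi M Y \<Longrightarrow> integrable M (\<lambda>\<omega>. norm (Y \<omega>))"
  by (rule square_integrable_imp_integrable) (auto simp: sqi_def)

lemma sqi_prod: "sqi M Y \<Longrightarrow> sqi M Z \<Longrightarrow> integrable M (\<lambda>\<omega>. norm (Y \<omega>) * norm (Z \<omega>))"
proof -
  assume y: "sqi M Y" and z: "sqi M Z"
  have "integrable M (\<lambda>\<omega>. (norm (Y \<omega>))\<^sup>2 / 2 + (norm (Z \<omega>))\<^sup>2 / 2)"
    using sqiD(2)[OF y] sqiD(2)[OF z] by auto
  moreover have "\<bar>norm (Y \<omega>) * norm (Z \<omega>)\<bar> \<le> (norm (Y \<omega>))\<^sup>2 / 2 + (norm (Z \<omega>))\<^sup>2 / 2" for \<omega>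
    using prod_le_sq[of "norm (Y \<omega>)" "norm (Z \<omega>)"] by simp
  moreover have "(\<lambda>\<omega>. norm (Y \<omega>) * norm (Z \<omega>)) \<in> borel_measurable M" using sqiD(1)[OF y] sqiD(1)[OF z] by measurable
  ultimately show ?thesis by (auto intro: int_bound)
qed

lemma sqi_inner: "sqi M Y \<Longrightarrow> sqi M Z \<Longrightarrow> integrable M (\<lambda>\<omega>. Y \<omega> \<bullet> Z \<omega>)"
proof -
  assume y: "sqi M Y" and z: "sqi M Z"
  have "(\<lambda>\<omega>. Y \<omega> \<bullet> Z \<omega>) \<in> borel_measurable M" using sqiD(1)[OF y] sqiD(1)[OF z] by measurable
  moreover have "\<bar>Y \<omega> \<bullet> Z \<omega>\<bar> \<le> norm (Y \<omega>) * norm (Z \<omega>)" for \<omega>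
    using Cauchy_Schwarz_ineq2[of "Y \<omega>" "Z \<omega>"] by simp
  ultimately show ?thesis using sqi_prod[OF y z] by (auto intro: int_bound)
qed

lemma sqi_real: "sqi M (Y :: 'a \<Rightarrow> real) \<Longrightarrow> integrable M (\<lambda>\<omega>. (Y \<omega>)\<^sup>2)"
  unfolding sqi_def by simp

lemma jensen_sq:
  fixes Y :: "'a \<Rightarrow> real"
  assumes "integrable M Y" "integrable M (\<lambda>\<omega>. (Y \<omega>)\<^sup>2)"
  shows "(expectation Y)\<^sup>2 \<le> expectation (\<lambda>\<omega>. (Y \<omega>)\<^sup>2)"
  using variance_eq[OF assms] variance_positive[of Y] by simp

lemma sqrt_bound:
  assumes "sqi M Y"
  shows "expectation (\<lambda>\<omega>. norm (Y \<omega>)) \<le> sqrt (expectation (\<lambda>\<omega>. (norm (Y \<omega>))\<^sup>2))"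
proof -
  have "(expectation (\<lambda>\<omega>. norm (Y \<omega>)))\<^sup>2 \<le> expectation (\<lambda>\<omega>. (norm (Y \<omega>))\<^sup>2)"
    using assms by (intro jensen_sq sqi_norm) (auto simp: sqi_def)
  thus ?thesis using real_le_rsqrt by blast
qed

end



locale sumloc = prob_space M for M :: "'a measure" +
  fixes f :: "'v::euclidean_space \<Rightarrow> real" and f' :: "'v \<Rightarrow> 'v"
    and L fstar mu lam G :: real and eta :: "nat \<Rightarrow> real" and x1 :: 'v and g :: "nat \<Rightarrow> 'a \<Rightarrow> 'v"
  assumes grad: "\<And>x. (f has_derivative (\<lambda>h. f' x \<bullet> h)) (at x)"
    and lip: "\<And>x y. norm (f' x - f' y) \<le> L * norm (x - y)"
    and lower: "\<And>x. fstar \<le> f x"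
    and mu0: "0 \<le> mu" and mu1: "mu < 1"
    and lam0: "0 \<le> lam" and lam1: "lam \<le> 1 / (1 - mu)"
    and eta_pos: "\<And>t. t \<ge> 1 \<Longrightarrow> eta t > 0"
    and eta_div: "\<not> summable (\<lambda>t. eta (Suc t))"
    and eta_sq: "summable (\<lambda>t. (eta (Suc t))\<^sup>2)"
    and g_meas: "\<And>t. t \<ge> 1 \<Longrightarrow> g t \<in> borel_measurable M"
    and unbiased: "\<And>t b. t \<ge> 1 \<Longrightarrow> b \<in> Basis \<Longrightarrow>
        AE \<omega> in M. real_cond_exp M (hist M g t) (\<lambda>\<omega>. g t \<omega> \<bullet> b) \<omega>
                   = f' (sum_x mu lam eta x1 (\<lambda>i. g i \<omega>) t) \<bullet> b"
    and second_moment: "\<And>t. t \<ge> 1 \<Longrightarrow>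
        (\<integral>\<^sup>+ \<omega>. ennreal ((norm (g t \<omega>))\<^sup>2) \<partial>M) \<le> ennreal (G\<^sup>2)"
begin

definition "K = max L 1"
definition "cc = mu * (1 - (1 - mu) * lam) / (1 - mu)"
definition "e k = eta (Suc k)"
definition "xs k \<omega> = fst (sum_xm mu lam eta x1 (\<lambda>i. g i \<omega>) k)"
definition "ms k \<omega> = snd (sum_xm mu lam eta x1 (\<lambda>i. g i \<omega>) k)"
definition "zs k \<omega> = xs k \<omega> + cc *\<^sub>R ms k \<omega>"

lemma K_pos: "K > 0" and lipK: "norm (f' x - f' y) \<le> K * norm (x - y)"
proof -
  show "K > 0" unfolding K_def by simp
  have "L * norm (x - y) \<le> K * norm (x - y)" unfolding K_def by (intro mult_right_mono) auto
  thus "norm (f' x - f' y) \<le> K * norm (x - y)" using lip[of x y] by linarith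
qed

lemma e_pos: "e k > 0" unfolding e_def by (rule eta_pos) simp

lemma ms_Suc: "ms (Suc k) \<omega> = mu *\<^sub>R ms k \<omega> - e k *\<^sub>R g (Suc k) \<omega>"
  unfolding ms_def e_def by (simp add: Let_def)

lemma ms_0: "ms 0 \<omega> = 0" unfolding ms_def by simp

lemma zs_Suc: "zs (Suc k) \<omega> = zs k \<omega> - (e k / (1 - mu)) *\<^sub>R g (Suc k) \<omega>"
proof -
  define s where "s = (1 - (1 - mu) * lam + cc)"
  have s1: "s * mu = cc" unfolding s_def cc_def using mu1 by (simp add: field_simps)
  have s2: "lam * e k + s * e k = e k / (1 - mu)" unfolding s_def cc_def using mu1
    by (simp add: field_simps)
  have "zs (Suc k) \<omega> = xs k \<omega> - (lam * e k) *\<^sub>R g (Suc k) \<omega> + s *\<^sub>R (mu *\<^sub>R ms k \<omega> - e k *\<^sub>R g (Suc k) \<omega>)"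
    unfolding zs_def xs_def ms_def e_def s_def by (simp add: Let_def algebra_simps)
  also have "\<dots> = xs k \<omega> + (s * mu) *\<^sub>R ms k \<omega> - (lam * e k + s * e k) *\<^sub>R g (Suc k) \<omega>"
    by (simp add: algebra_simps)
  also have "\<dots> = zs k \<omega> - (e k / (1 - mu)) *\<^sub>R g (Suc k) \<omega>"
    unfolding s1 s2 zs_def by simp
  finally show ?thesis .
qed

lemma xs_sum_x: "sum_x mu lam eta x1 (\<lambda>i. g i \<omega>) (Suc k) = xs k \<omega>"
  unfolding sum_x_def xs_def by simp

lemma xs_zs: "xs k \<omega> = zs k \<omega> - cc *\<^sub>R ms k \<omega>"
  unfolding zs_def by simp

lemma meas_hist:
  assumes "k < t"
  shows "(\<lambda>\<omega>. xs k \<omega>) \<in> borel_measurable (hist M g t) \<and> (\<lambda>\<omega>. ms k \<omega>) \<in> borel_measurable (hist M g t)"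
  using assms
proof (induction k)
  case 0
  then show ?case unfolding xs_def ms_def by simp
next
  case (Suc k)
  hence IH: "(\<lambda>\<omega>. xs k \<omega>) \<in> borel_measurable (hist M g t)" "(\<lambda>\<omega>. ms k \<omega>) \<in> borel_measurable (hist M g t)"
    by auto
  have gm: "g (Suc k) \<in> borel_measurable (hist M g t)" using Suc.prems by (intro hist_meas) auto
  have m: "(\<lambda>\<omega>. ms (Suc k) \<omega>) \<in> borel_measurable (hist M g t)"
    unfolding ms_Suc using IH gm by measurable
  moreover have "(\<lambda>\<omega>. xs (Suc k) \<omega>) \<in> borel_measurable (hist M g t)"
  proof -
    have "xs (Suc k) = (\<lambda>\<omega>. xs k \<omega> - (lam * e k) *\<^sub>R g (Suc k) \<omega> + (1 - (1 - mu) * lam) *\<^sub>R ms (Suc k) \<omega>)"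
      unfolding xs_def ms_def e_def by (auto simp: Let_def)
    thus ?thesis using IH gm m by simp
  qed
  ultimately show ?case by simp
qed

lemma sub: "subalgebra M (hist M g t)"
  by (rule hist_sub) (use g_meas in auto)

lemma meas_M: "(\<lambda>\<omega>. xs k \<omega>) \<in> borel_measurable M" "(\<lambda>\<omega>. ms k \<omega>) \<in> borel_measurable M"
  "(\<lambda>\<omega>. zs k \<omega>) \<in> borel_measurable M"
proof -
  show 1: "(\<lambda>\<omega>. xs k \<omega>) \<in> borel_measurable M" "(\<lambda>\<omega>. ms k \<omega>) \<in> borel_measurable M"
    using meas_hist[of k "Suc k"] measurable_from_subalg[OF sub] by auto
  show "(\<lambda>\<omega>. zs k \<omega>) \<in> borel_measurable M" unfolding zs_def using 1 by measurable
qed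


lemma f'_cont: "continuous_on UNIV f'"
  by (rule lipschitz_on_continuous_on[of K])
     (auto intro!: lipschitz_onI simp: dist_norm lipK less_imp_le[OF K_pos])

lemma f_cont: "continuous_on UNIV f"
  using has_derivative_continuous[OF grad] by (simp add: continuous_at_imp_continuous_on)

lemma f'_meas[measurable]: "f' \<in> borel_measurable borel"
  by (rule borel_measurable_continuous_onI[OF f'_cont])

lemma f_meas[measurable]: "f \<in> borel_measurable borel"
  by (rule borel_measurable_continuous_onI[OF f_cont])

lemma descent: "\<bar>f y - f x - f' x \<bullet> (y - x)\<bar> \<le> K / 2 * (norm (y - x))\<^sup>2"
  by (rule descent_aux[OF grad lipK])

lemma grad_bound: "(norm (f' x))\<^sup>2 \<le> 2 * K * (f x - fstar)"
proof -
  define y where "y = x - (1 / K) *\<^sub>R f' x"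
  have "f y \<le> f x + f' x \<bullet> (y - x) + K / 2 * (norm (y - x))\<^sup>2"
    using descent[of y x] by linarith
  also have "\<dots> = f x - (norm (f' x))\<^sup>2 / (2 * K)"
    using K_pos unfolding y_def by (simp add: dot_square_norm power2_eq_square field_simps)
  finally have "fstar \<le> f x - (norm (f' x))\<^sup>2 / (2 * K)" using lower[of y] by linarith
  thus ?thesis using K_pos by (simp add: field_simps)
qed

lemma g_sqi: "k \<ge> 1 \<Longrightarrow> sqi M (g k)"
proof -
  assume k: "k \<ge> 1"
  have m: "g k \<in> borel_measurable M" using g_meas[OF k] .
  have "(\<integral>\<^sup>+ \<omega>. ennreal (norm ((norm (g k \<omega>))\<^sup>2)) \<partial>M) < \<infinity>"
    using second_moment[OF k] by (simp add: le_less_trans)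
  hence "integrable M (\<lambda>\<omega>. (norm (g k \<omega>))\<^sup>2)"
    using m by (subst integrable_iff_bounded) auto
  thus ?thesis using m unfolding sqi_def by simp
qed

lemma g_mom: "k \<ge> 1 \<Longrightarrow> expectation (\<lambda>\<omega>. (norm (g k \<omega>))\<^sup>2) \<le> G\<^sup>2"
proof -
  assume k: "k \<ge> 1"
  have "ennreal (expectation (\<lambda>\<omega>. (norm (g k \<omega>))\<^sup>2)) = (\<integral>\<^sup>+ \<omega>. ennreal ((norm (g k \<omega>))\<^sup>2) \<partial>M)"
    using sqiD(2)[OF g_sqi[OF k]] by (intro nn_integral_eq_integral[symmetric]) auto
  also have "\<dots> \<le> ennreal (G\<^sup>2)" using second_moment[OF k] .
  finally show ?thesis by simp
qed

lemma g_mom1: "k \<ge> 1 \<Longrightarrow> expectation (\<lambda>\<omega>. norm (g k \<omega>)) \<le> \<bar>G\<bar>"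
proof -
  assume k: "k \<ge> 1"
  have "expectation (\<lambda>\<omega>. norm (g k \<omega>)) \<le> sqrt (expectation (\<lambda>\<omega>. (norm (g k \<omega>))\<^sup>2))"
    by (rule sqrt_bound[OF g_sqi[OF k]])
  also have "\<dots> \<le> sqrt (G\<^sup>2)" using g_mom[OF k] by (rule real_sqrt_le_mono)
  finally show ?thesis by simp
qed

lemma ms_sqi: "sqi M (ms k)"
proof (induction k)
  case 0 thus ?case using sqi_const[of 0] by (simp add: ms_0[abs_def])
next
  case (Suc k)
  have "sqi M (\<lambda>\<omega>. mu *\<^sub>R ms k \<omega> - e k *\<^sub>R g (Suc k) \<omega>)"
    by (intro sqi_diff sqi_scale Suc g_sqi) simp
  thus ?case by (simp add: ms_Suc[abs_def])
qed

lemma zs_sqi: "sqi M (zs k)"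
proof (induction k)
  case 0
  have "zs 0 = (\<lambda>\<omega>. x1)" unfolding zs_def xs_def ms_def by auto
  thus ?case using sqi_const by simp
next
  case (Suc k)
  have "sqi M (\<lambda>\<omega>. zs k \<omega> - (e k / (1 - mu)) *\<^sub>R g (Suc k) \<omega>)"
    by (intro sqi_diff sqi_scale Suc g_sqi) simp
  thus ?case by (simp add: zs_Suc[abs_def])
qed

lemma xs_sqi: "sqi M (xs k)"
proof -
  have "sqi M (\<lambda>\<omega>. zs k \<omega> - cc *\<^sub>R ms k \<omega>)" by (intro sqi_diff sqi_scale zs_sqi ms_sqi)
  thus ?thesis by (simp add: xs_zs[abs_def])
qed

lemma f'_sqi: "sqi M Y \<Longrightarrow> sqi M (\<lambda>\<omega>. f' (Y \<omega>))"
proof (rule sqi_bound[where A=K and B="norm (f' 0)"])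
  assume "sqi M Y"
  thus "(\<lambda>\<omega>. f' (Y \<omega>)) \<in> borel_measurable M" using sqiD(1) by measurable
  show "norm (f' (Y \<omega>)) \<le> K * norm (Y \<omega>) + norm (f' 0)" for \<omega>
    using lipK[of "Y \<omega>" 0] norm_triangle_ineq2[of "f' (Y \<omega>)" "f' 0"] by simp
qed (use K_pos in auto)

lemma f_int: "sqi M Y \<Longrightarrow> integrable M (\<lambda>\<omega>. f (Y \<omega>))"
proof (rule int_bound)
  assume Y: "sqi M Y"
  show "integrable M (\<lambda>\<omega>. \<bar>fstar\<bar> + \<bar>f 0\<bar> + norm (f' 0) * norm (Y \<omega>) + K / 2 * (norm (Y \<omega>))\<^sup>2)"
    using sqi_norm[OF Y] sqiD(2)[OF Y] by auto
  show "(\<lambda>\<omega>. f (Y \<omega>)) \<in> borel_measurable M" using sqiD(1)[OF Y] by measurable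
  fix \<omega>
  have a: "\<bar>f (Y \<omega>) - f 0 - f' 0 \<bullet> Y \<omega>\<bar> \<le> K / 2 * (norm (Y \<omega>))\<^sup>2"
    using descent[of "Y \<omega>" 0] by simp
  have b: "\<bar>f' 0 \<bullet> Y \<omega>\<bar> \<le> norm (f' 0) * norm (Y \<omega>)" by (rule Cauchy_Schwarz_ineq2)
  show "\<bar>f (Y \<omega>)\<bar> \<le> \<bar>fstar\<bar> + \<bar>f 0\<bar> + norm (f' 0) * norm (Y \<omega>) + K / 2 * (norm (Y \<omega>))\<^sup>2"
    using a b lower[of "Y \<omega>"] abs_ge_self[of fstar] abs_ge_self[of "f 0"] abs_ge_minus_self[of fstar]
    by (simp only: abs_le_iff) linarith
qed


lemma cond_step:
  "expectation (\<lambda>\<omega>. f' (zs k \<omega>) \<bullet> g (Suc k) \<omega>) = expectation (\<lambda>\<omega>. f' (zs k \<omega>) \<bullet> f' (xs k \<omega>))"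
proof -
  define F where "F = hist M g (Suc k)"
  interpret S: finite_measure_subalgebra M F
    by unfold_locales (simp add: F_def sub)
  have hm: "(\<lambda>\<omega>. xs k \<omega>) \<in> borel_measurable F" "(\<lambda>\<omega>. ms k \<omega>) \<in> borel_measurable F"
    using meas_hist[of k "Suc k"] unfolding F_def by auto
  have zF: "(\<lambda>\<omega>. zs k \<omega>) \<in> borel_measurable F" unfolding zs_def using hm by measurable
  have gM: "g (Suc k) \<in> borel_measurable M" by (rule g_meas) simp
  have Zs: "sqi M (\<lambda>\<omega>. f' (zs k \<omega>))" by (rule f'_sqi[OF zs_sqi])
  have Xs: "sqi M (\<lambda>\<omega>. f' (xs k \<omega>))" by (rule f'_sqi[OF xs_sqi])
  have Gs: "sqi M (g (Suc k))" by (rule g_sqi) simp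
  have each: "expectation (\<lambda>\<omega>. (f' (zs k \<omega>) \<bullet> b) * (g (Suc k) \<omega> \<bullet> b))
      = expectation (\<lambda>\<omega>. (f' (zs k \<omega>) \<bullet> b) * (f' (xs k \<omega>) \<bullet> b))"
    and int1: "integrable M (\<lambda>\<omega>. (f' (zs k \<omega>) \<bullet> b) * (g (Suc k) \<omega> \<bullet> b))"
    and int2: "integrable M (\<lambda>\<omega>. (f' (zs k \<omega>) \<bullet> b) * (f' (xs k \<omega>) \<bullet> b))"
    if b: "b \<in> Basis" for b
  proof -
    have bnd: "\<bar>(u \<bullet> b) * (v \<bullet> b)\<bar> \<le> norm u * norm v" for u v :: 'v
      using Basis_le_norm[OF b, of u] Basis_le_norm[OF b, of v]
      by (simp add: abs_mult mult_mono')
    show i1: "integrable M (\<lambda>\<omega>. (f' (zs k \<omega>) \<bullet> b) * (g (Suc k) \<omega> \<bullet> b))"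
    proof (rule int_bound[OF sqi_prod[OF Zs Gs]])
      show "(\<lambda>\<omega>. (f' (zs k \<omega>) \<bullet> b) * (g (Suc k) \<omega> \<bullet> b)) \<in> borel_measurable M"
        using meas_M(3) gM by measurable
    qed (rule bnd)
    show "integrable M (\<lambda>\<omega>. (f' (zs k \<omega>) \<bullet> b) * (f' (xs k \<omega>) \<bullet> b))"
    proof (rule int_bound[OF sqi_prod[OF Zs Xs]])
      show "(\<lambda>\<omega>. (f' (zs k \<omega>) \<bullet> b) * (f' (xs k \<omega>) \<bullet> b)) \<in> borel_measurable M"
        using meas_M(1,3) by measurable
    qed (rule bnd)
    have zbF: "(\<lambda>\<omega>. f' (zs k \<omega>) \<bullet> b) \<in> borel_measurable F" using zF by measurable
    have gbM: "(\<lambda>\<omega>. g (Suc k) \<omega> \<bullet> b) \<in> borel_measurable M" using gM by measurable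
    have "expectation (\<lambda>\<omega>. (f' (zs k \<omega>) \<bullet> b) * (g (Suc k) \<omega> \<bullet> b))
       = expectation (\<lambda>\<omega>. (f' (zs k \<omega>) \<bullet> b) * real_cond_exp M F (\<lambda>\<omega>. g (Suc k) \<omega> \<bullet> b) \<omega>)"
      using S.real_cond_exp_intg(2)[OF i1 zbF gbM] by simp
    also have "\<dots> = expectation (\<lambda>\<omega>. (f' (zs k \<omega>) \<bullet> b) * (f' (xs k \<omega>) \<bullet> b))"
    proof (rule integral_cong_AE)
      show "(\<lambda>\<omega>. (f' (zs k \<omega>) \<bullet> b) * real_cond_exp M F (\<lambda>\<omega>. g (Suc k) \<omega> \<bullet> b) \<omega>) \<in> borel_measurable M"
        using meas_M(3) by measurable
      show "(\<lambda>\<omega>. (f' (zs k \<omega>) \<bullet> b) * (f' (xs k \<omega>) \<bullet> b)) \<in> borel_measurable M"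
        using meas_M(1,3) by measurable
      show "AE \<omega> in M. (f' (zs k \<omega>) \<bullet> b) * real_cond_exp M F (\<lambda>\<omega>. g (Suc k) \<omega> \<bullet> b) \<omega>
          = (f' (zs k \<omega>) \<bullet> b) * (f' (xs k \<omega>) \<bullet> b)"
        using unbiased[of "Suc k" b] b unfolding F_def by (auto simp: xs_sum_x)
    qed
    finally show "expectation (\<lambda>\<omega>. (f' (zs k \<omega>) \<bullet> b) * (g (Suc k) \<omega> \<bullet> b))
      = expectation (\<lambda>\<omega>. (f' (zs k \<omega>) \<bullet> b) * (f' (xs k \<omega>) \<bullet> b))" .
  qed
  have "expectation (\<lambda>\<omega>. f' (zs k \<omega>) \<bullet> g (Suc k) \<omega>)
      = expectation (\<lambda>\<omega>. \<Sum>b\<in>Basis. (f' (zs k \<omega>) \<bullet> b) * (g (Suc k) \<omega> \<bullet> b))"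
    by (subst euclidean_inner) simp
  also have "\<dots> = (\<Sum>b\<in>Basis. expectation (\<lambda>\<omega>. (f' (zs k \<omega>) \<bullet> b) * (g (Suc k) \<omega> \<bullet> b)))"
    by (rule Bochner_Integration.integral_sum) (rule int1)
  also have "\<dots> = (\<Sum>b\<in>Basis. expectation (\<lambda>\<omega>. (f' (zs k \<omega>) \<bullet> b) * (f' (xs k \<omega>) \<bullet> b)))"
    by (rule sum.cong) (auto simp: each)
  also have "\<dots> = expectation (\<lambda>\<omega>. \<Sum>b\<in>Basis. (f' (zs k \<omega>) \<bullet> b) * (f' (xs k \<omega>) \<bullet> b))"
    by (rule Bochner_Integration.integral_sum[symmetric]) (rule int2)
  also have "\<dots> = expectation (\<lambda>\<omega>. f' (zs k \<omega>) \<bullet> f' (xs k \<omega>))"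
    by (subst (2) euclidean_inner) simp
  finally show ?thesis .
qed


definition "V k = expectation (\<lambda>\<omega>. (norm (ms k \<omega>))\<^sup>2)"
definition "D k = expectation (\<lambda>\<omega>. (norm (f' (zs k \<omega>)))\<^sup>2)"
definition "EF k = expectation (\<lambda>\<omega>. f (zs k \<omega>))"

lemma V_nonneg: "V k \<ge> 0" unfolding V_def by (rule integral_nonneg_AE) auto
lemma D_nonneg: "D k \<ge> 0" unfolding D_def by (rule integral_nonneg_AE) auto
lemma EF_lower: "EF k \<ge> fstar"
proof -
  have "expectation (\<lambda>\<omega>. fstar) \<le> EF k"
    unfolding EF_def by (rule integral_mono[OF _ f_int[OF zs_sqi]]) (auto simp: lower)
  thus ?thesis by (simp add: prob_space)
qed

lemma conv_sq:
  fixes A B :: real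
  assumes "A \<ge> 0" "B \<ge> 0"
  shows "(mu * A + B)\<^sup>2 \<le> mu * A\<^sup>2 + B\<^sup>2 / (1 - mu)"
proof -
  have "(1 - mu) * (mu * A\<^sup>2 + B\<^sup>2 / (1 - mu) - (mu * A + B)\<^sup>2) = mu * ((1 - mu) * A - B)\<^sup>2"
    using assms mu1 by (simp add: field_simps power2_eq_square)
  also have "\<dots> \<ge> 0" using assms mu0 by simp
  finally have "0 \<le> (1 - mu) * (mu * A\<^sup>2 + B\<^sup>2 / (1 - mu) - (mu * A + B)\<^sup>2)" .
  hence "0 \<le> mu * A\<^sup>2 + B\<^sup>2 / (1 - mu) - (mu * A + B)\<^sup>2"
    using assms mu1 by (simp add: zero_le_mult_iff)
  thus ?thesis by simp
qed

lemma V_step: "V (Suc k) \<le> mu * V k + (e k)\<^sup>2 * G\<^sup>2 / (1 - mu)"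
proof -
  have Gs: "sqi M (g (Suc k))" by (rule g_sqi) simp
  have pw: "(norm (ms (Suc k) \<omega>))\<^sup>2 \<le> mu * (norm (ms k \<omega>))\<^sup>2 + (e k)\<^sup>2 / (1 - mu) * (norm (g (Suc k) \<omega>))\<^sup>2" for \<omega>
  proof -
    have "norm (ms (Suc k) \<omega>) \<le> mu * norm (ms k \<omega>) + e k * norm (g (Suc k) \<omega>)"
      unfolding ms_Suc using norm_triangle_ineq4[of "mu *\<^sub>R ms k \<omega>" "e k *\<^sub>R g (Suc k) \<omega>"] mu0 e_pos[of k]
      by simp
    hence "(norm (ms (Suc k) \<omega>))\<^sup>2 \<le> (mu * norm (ms k \<omega>) + e k * norm (g (Suc k) \<omega>))\<^sup>2"
      by (intro power_mono) auto
    also have "\<dots> \<le> mu * (norm (ms k \<omega>))\<^sup>2 + (e k * norm (g (Suc k) \<omega>))\<^sup>2 / (1 - mu)"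
      using e_pos[of k] by (intro conv_sq) auto
    finally show ?thesis by (simp add: power_mult_distrib)
  qed
  have "V (Suc k) \<le> expectation (\<lambda>\<omega>. mu * (norm (ms k \<omega>))\<^sup>2 + (e k)\<^sup>2 / (1 - mu) * (norm (g (Suc k) \<omega>))\<^sup>2)"
    unfolding V_def using sqiD(2)[OF ms_sqi[of "Suc k"]] sqiD(2)[OF ms_sqi[of k]] sqiD(2)[OF Gs]
    by (intro integral_mono pw) auto
  also have "\<dots> = mu * V k + (e k)\<^sup>2 / (1 - mu) * expectation (\<lambda>\<omega>. (norm (g (Suc k) \<omega>))\<^sup>2)"
    unfolding V_def using sqiD(2)[OF ms_sqi[of k]] sqiD(2)[OF Gs] by simp
  also have "\<dots> \<le> mu * V k + (e k)\<^sup>2 / (1 - mu) * G\<^sup>2"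
    using g_mom[of "Suc k"] mu1 by (intro add_left_mono mult_left_mono) auto
  finally show ?thesis by simp
qed

lemma inner_lb: "f' (zs k \<omega>) \<bullet> f' (xs k \<omega>) \<ge> (norm (f' (zs k \<omega>)))\<^sup>2 / 2 - K\<^sup>2 * cc\<^sup>2 * (norm (ms k \<omega>))\<^sup>2 / 2"
proof -
  define p where "p = f' (zs k \<omega>)"
  define q where "q = f' (xs k \<omega>)"
  have nq: "norm (p - q) \<le> K * (\<bar>cc\<bar> * norm (ms k \<omega>))"
    using lipK[of "zs k \<omega>" "xs k \<omega>"] unfolding p_def q_def xs_zs by simp
  have "p \<bullet> q = p \<bullet> p - p \<bullet> (p - q)" by (simp add: inner_diff_right)
  also have "\<dots> \<ge> (norm p)\<^sup>2 - norm p * (K * (\<bar>cc\<bar> * norm (ms k \<omega>)))"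
  proof -
    have "p \<bullet> (p - q) \<le> norm p * norm (p - q)" by (rule norm_cauchy_schwarz)
    also have "\<dots> \<le> norm p * (K * (\<bar>cc\<bar> * norm (ms k \<omega>)))" by (intro mult_left_mono nq) simp
    finally show ?thesis by (simp add: dot_square_norm)
  qed
  finally have "p \<bullet> q \<ge> (norm p)\<^sup>2 - norm p * (K * (\<bar>cc\<bar> * norm (ms k \<omega>)))" .
  moreover have "norm p * (K * (\<bar>cc\<bar> * norm (ms k \<omega>))) \<le> (norm p)\<^sup>2 / 2 + (K * (\<bar>cc\<bar> * norm (ms k \<omega>)))\<^sup>2 / 2"
    by (rule prod_le_sq)
  ultimately show ?thesis unfolding p_def q_def by (simp add: power_mult_distrib)
qed


lemma EF_step: "EF (Suc k) \<le> EF k - (e k / (1 - mu)) * (D k / 2 - K\<^sup>2 * cc\<^sup>2 * V k / 2)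
    + K / 2 * (e k / (1 - mu))\<^sup>2 * G\<^sup>2"
proof -
  define a where "a = e k / (1 - mu)"
  have a0: "a > 0" unfolding a_def using e_pos[of k] mu1 by simp
  have Gs: "sqi M (g (Suc k))" by (rule g_sqi) simp
  have Zs: "sqi M (\<lambda>\<omega>. f' (zs k \<omega>))" by (rule f'_sqi[OF zs_sqi])
  have Xs: "sqi M (\<lambda>\<omega>. f' (xs k \<omega>))" by (rule f'_sqi[OF xs_sqi])
  have pw: "f (zs (Suc k) \<omega>) \<le> f (zs k \<omega>) - a * (f' (zs k \<omega>) \<bullet> g (Suc k) \<omega>) + K / 2 * a\<^sup>2 * (norm (g (Suc k) \<omega>))\<^sup>2" for \<omega>
  proof -
    have d: "zs (Suc k) \<omega> - zs k \<omega> = - (a *\<^sub>R g (Suc k) \<omega>)" unfolding zs_Suc a_def by simp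
    have "f (zs (Suc k) \<omega>) - f (zs k \<omega>) - f' (zs k \<omega>) \<bullet> (zs (Suc k) \<omega> - zs k \<omega>) \<le> K / 2 * (norm (zs (Suc k) \<omega> - zs k \<omega>))\<^sup>2"
      by (rule abs_le_D1[OF descent])
    thus ?thesis unfolding d using a0 by (simp add: power_mult_distrib)
  qed
  have i1: "integrable M (\<lambda>\<omega>. f' (zs k \<omega>) \<bullet> g (Suc k) \<omega>)" by (rule sqi_inner[OF Zs Gs])
  have i2: "integrable M (\<lambda>\<omega>. (norm (g (Suc k) \<omega>))\<^sup>2)" by (rule sqiD(2)[OF Gs])
  have i3: "integrable M (\<lambda>\<omega>. f (zs k \<omega>))" by (rule f_int[OF zs_sqi])
  have "EF (Suc k) \<le> expectation (\<lambda>\<omega>. f (zs k \<omega>) - a * (f' (zs k \<omega>) \<bullet> g (Suc k) \<omega>) + K / 2 * a\<^sup>2 * (norm (g (Suc k) \<omega>))\<^sup>2)"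
    unfolding EF_def using f_int[OF zs_sqi[of "Suc k"]] i1 i2 i3 by (intro integral_mono pw) auto
  also have "\<dots> = EF k - a * expectation (\<lambda>\<omega>. f' (zs k \<omega>) \<bullet> g (Suc k) \<omega>) + K / 2 * a\<^sup>2 * expectation (\<lambda>\<omega>. (norm (g (Suc k) \<omega>))\<^sup>2)"
    unfolding EF_def using i1 i2 i3 by simp
  also have "expectation (\<lambda>\<omega>. f' (zs k \<omega>) \<bullet> g (Suc k) \<omega>) \<ge> D k / 2 - K\<^sup>2 * cc\<^sup>2 * V k / 2"
  proof -
    have "D k / 2 - K\<^sup>2 * cc\<^sup>2 * V k / 2 = expectation (\<lambda>\<omega>. (norm (f' (zs k \<omega>)))\<^sup>2 / 2 - K\<^sup>2 * cc\<^sup>2 * (norm (ms k \<omega>))\<^sup>2 / 2)"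
      unfolding D_def V_def using sqiD(2)[OF Zs] sqiD(2)[OF ms_sqi[of k]] by simp
    also have "\<dots> \<le> expectation (\<lambda>\<omega>. f' (zs k \<omega>) \<bullet> f' (xs k \<omega>))"
      using sqiD(2)[OF Zs] sqiD(2)[OF ms_sqi[of k]] sqi_inner[OF Zs Xs]
      by (intro integral_mono inner_lb) auto
    also have "\<dots> = expectation (\<lambda>\<omega>. f' (zs k \<omega>) \<bullet> g (Suc k) \<omega>)" by (rule cond_step[symmetric])
    finally show ?thesis .
  qed
  hence "EF k - a * expectation (\<lambda>\<omega>. f' (zs k \<omega>) \<bullet> g (Suc k) \<omega>) \<le> EF k - a * (D k / 2 - K\<^sup>2 * cc\<^sup>2 * V k / 2)"
    using a0 by (simp add: mult_left_mono)
  moreover have "K / 2 * a\<^sup>2 * expectation (\<lambda>\<omega>. (norm (g (Suc k) \<omega>))\<^sup>2) \<le> K / 2 * a\<^sup>2 * G\<^sup>2"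
    using g_mom[of "Suc k"] K_pos by (intro mult_left_mono) auto
  ultimately show ?thesis unfolding a_def by linarith
qed


lemma e_sq: "summable (\<lambda>k. (e k)\<^sup>2)" using eta_sq unfolding e_def .
lemma e_div: "\<not> summable e" using eta_div unfolding e_def[abs_def] .

definition "EB = 1 + (\<Sum>k. (e k)\<^sup>2)"

lemma e_le: "e k \<le> EB"
proof -
  have "e k \<le> 1 + (e k)\<^sup>2" using zero_le_power2[of "e k - 1/2"]
    by (simp add: power2_eq_square algebra_simps)
  moreover have "(e k)\<^sup>2 \<le> (\<Sum>k. (e k)\<^sup>2)" using sum_le_suminf[OF e_sq, of "{k}"] by simp
  ultimately show ?thesis unfolding EB_def by simp
qed

lemma V_summable: "summable V"
proof (rule rec_summable[where mu=mu and b="\<lambda>k. (e k)\<^sup>2 * G\<^sup>2 / (1 - mu)"])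
  show "summable (\<lambda>k. (e k)\<^sup>2 * G\<^sup>2 / (1 - mu))" by (intro summable_divide summable_mult2 e_sq)
qed (use V_step V_nonneg mu0 mu1 in auto)

lemma eV_summable: "summable (\<lambda>k. e k * V k)"
proof (rule summable_comparison_test'[where g="\<lambda>k. EB * V k" and N=0])
  show "summable (\<lambda>k. EB * V k)" by (intro summable_mult V_summable)
  fix n show "norm (e n * V n) \<le> EB * V n"
    using e_pos[of n] V_nonneg[of n] e_le[of n] by (simp add: mult_right_mono)
qed

definition "r k = (e k / (1 - mu)) * (K\<^sup>2 * cc\<^sup>2 * V k / 2) + K / 2 * (e k / (1 - mu))\<^sup>2 * G\<^sup>2"
definition "w k = (e k / (1 - mu)) * (D k / 2)"

lemma r_nonneg: "r k \<ge> 0"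
  unfolding r_def using e_pos[of k] mu1 V_nonneg[of k] K_pos by auto

lemma r_summable: "summable r"
proof -
  have "summable (\<lambda>k. (e k * V k) * (K\<^sup>2 * cc\<^sup>2 / (2 * (1 - mu))) + (e k)\<^sup>2 * (K / 2 * G\<^sup>2 / (1 - mu)\<^sup>2))"
    by (intro summable_add summable_mult2 eV_summable e_sq)
  moreover have "(\<lambda>k. (e k * V k) * (K\<^sup>2 * cc\<^sup>2 / (2 * (1 - mu))) + (e k)\<^sup>2 * (K / 2 * G\<^sup>2 / (1 - mu)\<^sup>2)) = r"
    unfolding r_def by (auto simp: field_simps power2_eq_square)
  ultimately show ?thesis by simp
qed

lemma EF_step': "EF (Suc k) \<le> EF k - w k + r k"
  using EF_step[of k] unfolding w_def r_def by (simp add: algebra_simps)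

lemma w_summable: "summable w" and EF_conv: "convergent EF"
proof -
  have w0: "w k \<ge> 0" for k unfolding w_def using e_pos[of k] mu1 D_nonneg[of k] by auto
  show "summable w" "convergent EF"
    using tele_summable[OF EF_step' w0 r_nonneg r_summable EF_lower] by auto
qed

lemma eD_summable: "summable (\<lambda>k. e k * D k)"
proof -
  have "summable (\<lambda>k. w k * (2 * (1 - mu)))" by (intro summable_mult2 w_summable)
  moreover have "(\<lambda>k. w k * (2 * (1 - mu))) = (\<lambda>k. e k * D k)" unfolding w_def using mu1 by (auto simp: field_simps)
  ultimately show ?thesis by simp
qed


lemma exp_abs_le:
  fixes h b :: "'a \<Rightarrow> real"
  assumes "integrable M b" "h \<in> borel_measurable M" "\<And>\<omega>. \<bar>h \<omega>\<bar> \<le> b \<omega>"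
  shows "\<bar>expectation h\<bar> \<le> expectation b"
proof -
  have ih: "integrable M h" by (rule int_bound[OF assms])
  have "\<bar>expectation h\<bar> \<le> expectation (\<lambda>\<omega>. \<bar>h \<omega>\<bar>)" by (rule integral_abs_bound)
  also have "\<dots> \<le> expectation b" using ih assms by (intro integral_mono) auto
  finally show ?thesis .
qed

definition "u k = expectation (\<lambda>\<omega>. norm (f' (zs k \<omega>)))"

lemma u_lim: "u \<longlonglongrightarrow> 0"
proof (rule seq_to_zero[where e=e])
  define C where "C = K * (\<bar>G\<bar> + 1) / (1 - mu)"
  show C0: "C > 0" unfolding C_def using K_pos mu1 by (simp add: add_pos_nonneg)
  show "e k > 0" for k by (rule e_pos)
  show "\<not> summable e" by (rule e_div)
  show u0: "u k \<ge> 0" for k unfolding u_def by (rule integral_nonneg_AE) auto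
  have usq: "(u k)\<^sup>2 \<le> D k" for k
  proof -
    have Zs: "sqi M (\<lambda>\<omega>. f' (zs k \<omega>))" by (rule f'_sqi[OF zs_sqi])
    show ?thesis unfolding u_def D_def
      using jensen_sq[of "\<lambda>\<omega>. norm (f' (zs k \<omega>))"] sqi_norm[OF Zs] sqiD(2)[OF Zs] by simp
  qed
  show "summable (\<lambda>k. e k * (u k)\<^sup>2)"
  proof (rule summable_comparison_test'[OF eD_summable, where N=0])
    fix n show "norm (e n * (u n)\<^sup>2) \<le> e n * D n"
      using usq[of n] e_pos[of n] by (simp add: mult_left_mono)
  qed
  show "\<bar>u (Suc k) - u k\<bar> \<le> C * e k" for k
  proof -
    define a where "a = e k / (1 - mu)"
    have a0: "a > 0" unfolding a_def using e_pos[of k] mu1 by simp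
    have Gs: "sqi M (g (Suc k))" by (rule g_sqi) simp
    have Z1: "sqi M (\<lambda>\<omega>. f' (zs (Suc k) \<omega>))" by (rule f'_sqi[OF zs_sqi])
    have Z0: "sqi M (\<lambda>\<omega>. f' (zs k \<omega>))" by (rule f'_sqi[OF zs_sqi])
    have "u (Suc k) - u k = expectation (\<lambda>\<omega>. norm (f' (zs (Suc k) \<omega>)) - norm (f' (zs k \<omega>)))"
      unfolding u_def using sqi_norm[OF Z1] sqi_norm[OF Z0] by simp
    also have "\<bar>\<dots>\<bar> \<le> expectation (\<lambda>\<omega>. K * a * norm (g (Suc k) \<omega>))"
    proof (rule exp_abs_le)
      show "integrable M (\<lambda>\<omega>. K * a * norm (g (Suc k) \<omega>))" using sqi_norm[OF Gs] by simp
      show "(\<lambda>\<omega>. norm (f' (zs (Suc k) \<omega>)) - norm (f' (zs k \<omega>))) \<in> borel_measurable M"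
        using meas_M(3) by measurable
      fix \<omega>
      have "\<bar>norm (f' (zs (Suc k) \<omega>)) - norm (f' (zs k \<omega>))\<bar> \<le> norm (f' (zs (Suc k) \<omega>) - f' (zs k \<omega>))"
        by (rule norm_triangle_ineq3)
      also have "\<dots> \<le> K * norm (zs (Suc k) \<omega> - zs k \<omega>)" by (rule lipK)
      also have "\<dots> = K * a * norm (g (Suc k) \<omega>)" unfolding zs_Suc a_def using e_pos[of k] mu1 by simp
      finally show "\<bar>norm (f' (zs (Suc k) \<omega>)) - norm (f' (zs k \<omega>))\<bar> \<le> K * a * norm (g (Suc k) \<omega>)" .
    qed
    also have "\<dots> = K * a * expectation (\<lambda>\<omega>. norm (g (Suc k) \<omega>))" by simp
    also have "\<dots> \<le> K * a * (\<bar>G\<bar> + 1)"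
      using g_mom1[of "Suc k"] K_pos a0 by (intro mult_left_mono) auto
    also have "\<dots> = C * e k" unfolding C_def a_def by simp
    finally show ?thesis .
  qed
qed

lemma ux_lim: "(\<lambda>k. expectation (\<lambda>\<omega>. norm (f' (xs k \<omega>)))) \<longlonglongrightarrow> 0"
proof (rule tendsto_sandwich[where f="\<lambda>k. 0" and h="\<lambda>k. u k + K * \<bar>cc\<bar> * sqrt (V k)"])
  show "\<forall>\<^sub>F k in sequentially. 0 \<le> expectation (\<lambda>\<omega>. norm (f' (xs k \<omega>)))"
    by (intro always_eventually allI integral_nonneg_AE) auto
  show "\<forall>\<^sub>F k in sequentially. expectation (\<lambda>\<omega>. norm (f' (xs k \<omega>))) \<le> u k + K * \<bar>cc\<bar> * sqrt (V k)"
  proof (intro always_eventually allI)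
    fix k
    have X: "sqi M (\<lambda>\<omega>. f' (xs k \<omega>))" by (rule f'_sqi[OF xs_sqi])
    have Z: "sqi M (\<lambda>\<omega>. f' (zs k \<omega>))" by (rule f'_sqi[OF zs_sqi])
    have "expectation (\<lambda>\<omega>. norm (f' (xs k \<omega>))) \<le> expectation (\<lambda>\<omega>. norm (f' (zs k \<omega>)) + K * \<bar>cc\<bar> * norm (ms k \<omega>))"
    proof (rule integral_mono)
      show "integrable M (\<lambda>\<omega>. norm (f' (xs k \<omega>)))" by (rule sqi_norm[OF X])
      show "integrable M (\<lambda>\<omega>. norm (f' (zs k \<omega>)) + K * \<bar>cc\<bar> * norm (ms k \<omega>))"
        using sqi_norm[OF Z] sqi_norm[OF ms_sqi[of k]] by simp
      fix \<omega>
      have "norm (f' (xs k \<omega>)) \<le> norm (f' (zs k \<omega>)) + norm (f' (xs k \<omega>) - f' (zs k \<omega>))"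
        by (rule norm_triangle_sub)
      also have "norm (f' (xs k \<omega>) - f' (zs k \<omega>)) \<le> K * norm (xs k \<omega> - zs k \<omega>)" by (rule lipK)
      also have "norm (xs k \<omega> - zs k \<omega>) = \<bar>cc\<bar> * norm (ms k \<omega>)" unfolding xs_zs by simp
      finally show "norm (f' (xs k \<omega>)) \<le> norm (f' (zs k \<omega>)) + K * \<bar>cc\<bar> * norm (ms k \<omega>)" by (simp add: mult.assoc)
    qed
    also have "\<dots> = u k + K * \<bar>cc\<bar> * expectation (\<lambda>\<omega>. norm (ms k \<omega>))"
      unfolding u_def using sqi_norm[OF Z] sqi_norm[OF ms_sqi[of k]] by simp
    also have "\<dots> \<le> u k + K * \<bar>cc\<bar> * sqrt (V k)"
      unfolding V_def using sqrt_bound[OF ms_sqi[of k]] K_pos by (intro add_left_mono mult_left_mono) auto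
    finally show "expectation (\<lambda>\<omega>. norm (f' (xs k \<omega>))) \<le> u k + K * \<bar>cc\<bar> * sqrt (V k)" .
  qed
  have "V \<longlonglongrightarrow> 0" by (rule summable_LIMSEQ_zero[OF V_summable])
  hence "(\<lambda>k. u k + K * \<bar>cc\<bar> * sqrt (V k)) \<longlonglongrightarrow> 0 + K * \<bar>cc\<bar> * sqrt 0"
    by (intro tendsto_intros u_lim)
  thus "(\<lambda>k. u k + K * \<bar>cc\<bar> * sqrt (V k)) \<longlonglongrightarrow> 0" by simp
qed simp


lemma wprod: "(p::real) * q \<le> s * p\<^sup>2 / 2 + q\<^sup>2 / (2 * s)" if "s > 0"
proof -
  have "0 \<le> (s * p - q)\<^sup>2 / s" using that by simp
  also have "(s * p - q)\<^sup>2 / s = s * p\<^sup>2 - 2 * p * q + q\<^sup>2 / s"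
    using that by (simp add: power2_eq_square field_simps)
  finally show ?thesis using that by (simp add: field_simps)
qed

lemma D_le: "D k \<le> 2 * K * (EF k - fstar)"
proof -
  have Z: "sqi M (\<lambda>\<omega>. f' (zs k \<omega>))" by (rule f'_sqi[OF zs_sqi])
  have "D k \<le> expectation (\<lambda>\<omega>. 2 * K * (f (zs k \<omega>) - fstar))"
    unfolding D_def using sqiD(2)[OF Z] f_int[OF zs_sqi[of k]] by (intro integral_mono grad_bound) auto
  also have "\<dots> = 2 * K * (EF k - fstar)"
    unfolding EF_def using f_int[OF zs_sqi[of k]] by (simp add: prob_space)
  finally show ?thesis .
qed

lemma fx_diff: "(\<lambda>k. expectation (\<lambda>\<omega>. f (xs k \<omega>)) - EF k) \<longlonglongrightarrow> 0"
proof -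
  obtain Bb where Bb: "\<And>k. norm (EF k) \<le> Bb" using BseqD[OF convergent_imp_Bseq[OF EF_conv]] by blast
  define DB where "DB = 2 * K * (Bb + \<bar>fstar\<bar>)"
  have DB: "D k \<le> DB" for k
  proof -
    have "EF k - fstar \<le> Bb + \<bar>fstar\<bar>" using Bb[of k] by (simp add: abs_le_iff) linarith
    hence "2 * K * (EF k - fstar) \<le> 2 * K * (Bb + \<bar>fstar\<bar>)" using K_pos by (intro mult_left_mono) auto
    thus ?thesis using D_le[of k] unfolding DB_def by linarith
  qed
  define s where "s k = sqrt (V k) + inverse (real (Suc k))" for k
  have s0: "s k > 0" for k unfolding s_def using V_nonneg[of k] by (simp add: add_nonneg_pos)
  have Vs: "V k / s k \<le> s k" for k
  proof -
    have "sqrt (V k) \<le> s k" unfolding s_def by simp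
    hence "(sqrt (V k))\<^sup>2 \<le> (s k)\<^sup>2" using V_nonneg[of k] by (intro power_mono) auto
    hence "V k \<le> s k * s k" using V_nonneg[of k] by (simp add: power2_eq_square)
    thus ?thesis using s0[of k] by (simp add: divide_le_eq)
  qed
  define bnd where "bnd k = \<bar>cc\<bar> * (s k * DB / 2 + s k / 2) + K / 2 * cc\<^sup>2 * V k" for k
  have main: "\<bar>expectation (\<lambda>\<omega>. f (xs k \<omega>)) - EF k\<bar> \<le> bnd k" for k
  proof -
    have Z: "sqi M (\<lambda>\<omega>. f' (zs k \<omega>))" by (rule f'_sqi[OF zs_sqi])
    have "expectation (\<lambda>\<omega>. f (xs k \<omega>)) - EF k = expectation (\<lambda>\<omega>. f (xs k \<omega>) - f (zs k \<omega>))"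
      unfolding EF_def using f_int[OF xs_sqi[of k]] f_int[OF zs_sqi[of k]] by simp
    hence "\<bar>expectation (\<lambda>\<omega>. f (xs k \<omega>)) - EF k\<bar> = \<bar>expectation (\<lambda>\<omega>. f (xs k \<omega>) - f (zs k \<omega>))\<bar>" by simp
    also have "\<dots> \<le> expectation (\<lambda>\<omega>. \<bar>cc\<bar> * (s k * (norm (f' (zs k \<omega>)))\<^sup>2 / 2 + (norm (ms k \<omega>))\<^sup>2 / (2 * s k))
        + K / 2 * cc\<^sup>2 * (norm (ms k \<omega>))\<^sup>2)"
    proof (rule exp_abs_le)
      show "integrable M (\<lambda>\<omega>. \<bar>cc\<bar> * (s k * (norm (f' (zs k \<omega>)))\<^sup>2 / 2 + (norm (ms k \<omega>))\<^sup>2 / (2 * s k))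
        + K / 2 * cc\<^sup>2 * (norm (ms k \<omega>))\<^sup>2)"
        using sqiD(2)[OF Z] sqiD(2)[OF ms_sqi[of k]] by simp
      show "(\<lambda>\<omega>. f (xs k \<omega>) - f (zs k \<omega>)) \<in> borel_measurable M"
        by (intro borel_measurable_diff borel_measurable_continuous_on[OF f_cont] meas_M)
      fix \<omega>
      have d: "\<bar>f (xs k \<omega>) - f (zs k \<omega>) - f' (zs k \<omega>) \<bullet> (xs k \<omega> - zs k \<omega>)\<bar> \<le> K / 2 * (norm (xs k \<omega> - zs k \<omega>))\<^sup>2"
        by (rule descent)
      have c: "\<bar>f' (zs k \<omega>) \<bullet> (xs k \<omega> - zs k \<omega>)\<bar> \<le> norm (f' (zs k \<omega>)) * (\<bar>cc\<bar> * norm (ms k \<omega>))"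
        using Cauchy_Schwarz_ineq2[of "f' (zs k \<omega>)" "xs k \<omega> - zs k \<omega>"] unfolding xs_zs by simp
      have w: "norm (f' (zs k \<omega>)) * norm (ms k \<omega>) \<le> s k * (norm (f' (zs k \<omega>)))\<^sup>2 / 2 + (norm (ms k \<omega>))\<^sup>2 / (2 * s k)"
        by (rule wprod[OF s0])
      have n2: "(norm (xs k \<omega> - zs k \<omega>))\<^sup>2 = cc\<^sup>2 * (norm (ms k \<omega>))\<^sup>2"
        unfolding xs_zs by (simp add: power_mult_distrib)
      have "\<bar>f (xs k \<omega>) - f (zs k \<omega>)\<bar> \<le> \<bar>cc\<bar> * (norm (f' (zs k \<omega>)) * norm (ms k \<omega>)) + K / 2 * cc\<^sup>2 * (norm (ms k \<omega>))\<^sup>2"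
      proof -
        let ?c = "f' (zs k \<omega>) \<bullet> (xs k \<omega> - zs k \<omega>)"
        have t: "\<bar>f (xs k \<omega>) - f (zs k \<omega>)\<bar> \<le> \<bar>f (xs k \<omega>) - f (zs k \<omega>) - ?c\<bar> + \<bar>?c\<bar>"
          using abs_triangle_ineq[of "f (xs k \<omega>) - f (zs k \<omega>) - ?c" ?c] by simp
        have d': "\<bar>f (xs k \<omega>) - f (zs k \<omega>) - ?c\<bar> \<le> K / 2 * cc\<^sup>2 * (norm (ms k \<omega>))\<^sup>2"
          using d unfolding n2 by (simp add: mult.assoc)
        have c': "\<bar>?c\<bar> \<le> \<bar>cc\<bar> * (norm (f' (zs k \<omega>)) * norm (ms k \<omega>))"
          using c by (simp add: mult.assoc mult.left_commute)
        show ?thesis using t d' c' by linarith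
      qed
      also have "\<dots> \<le> \<bar>cc\<bar> * (s k * (norm (f' (zs k \<omega>)))\<^sup>2 / 2 + (norm (ms k \<omega>))\<^sup>2 / (2 * s k)) + K / 2 * cc\<^sup>2 * (norm (ms k \<omega>))\<^sup>2"
        using w by (intro add_right_mono mult_left_mono) auto
      finally show "\<bar>f (xs k \<omega>) - f (zs k \<omega>)\<bar> \<le> \<bar>cc\<bar> * (s k * (norm (f' (zs k \<omega>)))\<^sup>2 / 2 + (norm (ms k \<omega>))\<^sup>2 / (2 * s k)) + K / 2 * cc\<^sup>2 * (norm (ms k \<omega>))\<^sup>2" .
    qed
    also have "\<dots> = expectation (\<lambda>\<omega>. (\<bar>cc\<bar> * s k / 2) * (norm (f' (zs k \<omega>)))\<^sup>2
        + (\<bar>cc\<bar> / (2 * s k) + K / 2 * cc\<^sup>2) * (norm (ms k \<omega>))\<^sup>2)"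
      by (rule Bochner_Integration.integral_cong) (simp_all add: field_simps)
    also have "\<dots> = (\<bar>cc\<bar> * s k / 2) * D k + (\<bar>cc\<bar> / (2 * s k) + K / 2 * cc\<^sup>2) * V k"
    proof -
      have i1: "integrable M (\<lambda>\<omega>. (\<bar>cc\<bar> * s k / 2) * (norm (f' (zs k \<omega>)))\<^sup>2)"
        by (rule integrable_mult_right[OF sqiD(2)[OF Z]])
      have i2: "integrable M (\<lambda>\<omega>. (\<bar>cc\<bar> / (2 * s k) + K / 2 * cc\<^sup>2) * (norm (ms k \<omega>))\<^sup>2)"
        by (rule integrable_mult_right[OF sqiD(2)[OF ms_sqi[of k]]])
      show ?thesis unfolding D_def V_def Bochner_Integration.integral_add[OF i1 i2]
        by (simp only: integral_mult_right_zero)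
    qed
    also have "\<dots> = \<bar>cc\<bar> * (s k * D k / 2 + V k / (2 * s k)) + K / 2 * cc\<^sup>2 * V k"
      using s0[of k] by (simp add: field_simps)
    also have "\<dots> \<le> bnd k"
    proof -
      have "s k * D k / 2 \<le> s k * DB / 2" using DB[of k] s0[of k] by (simp add: mult_left_mono)
      moreover have "V k / (2 * s k) \<le> s k / 2" using Vs[of k] by simp
      ultimately show ?thesis unfolding bnd_def by (intro add_right_mono mult_left_mono) auto
    qed
    finally show ?thesis .
  qed
  have V0: "V \<longlonglongrightarrow> 0" by (rule summable_LIMSEQ_zero[OF V_summable])
  have "s \<longlonglongrightarrow> sqrt 0 + 0" unfolding s_def[abs_def]
    by (intro tendsto_intros V0 LIMSEQ_inverse_real_of_nat)
  hence s_lim: "s \<longlonglongrightarrow> 0" by simp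
  have "bnd \<longlonglongrightarrow> \<bar>cc\<bar> * (0 * DB / 2 + 0 / 2) + K / 2 * cc\<^sup>2 * 0" unfolding bnd_def[abs_def]
    by (intro tendsto_intros s_lim V0) simp_all
  hence "bnd \<longlonglongrightarrow> 0" by simp
  have "(\<lambda>k. \<bar>expectation (\<lambda>\<omega>. f (xs k \<omega>)) - EF k\<bar>) \<longlonglongrightarrow> 0"
  proof (rule tendsto_sandwich[where f="\<lambda>k. 0" and h=bnd])
    show "\<forall>\<^sub>F n in sequentially. (0::real) \<le> \<bar>expectation (\<lambda>\<omega>. f (xs n \<omega>)) - EF n\<bar>" by simp
    show "\<forall>\<^sub>F n in sequentially. \<bar>expectation (\<lambda>\<omega>. f (xs n \<omega>)) - EF n\<bar> \<le> bnd n"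
      using main by simp
  qed (use \<open>bnd \<longlonglongrightarrow> 0\<close> in auto)
  thus ?thesis by (simp add: tendsto_rabs_zero_iff)
qed

lemma fx_lim: "\<exists>Fl. (\<lambda>k. expectation (\<lambda>\<omega>. f (xs k \<omega>))) \<longlonglongrightarrow> Fl"
proof -
  obtain Fl where "EF \<longlonglongrightarrow> Fl" using EF_conv by (auto simp: convergent_def)
  hence "(\<lambda>k. (expectation (\<lambda>\<omega>. f (xs k \<omega>)) - EF k) + EF k) \<longlonglongrightarrow> 0 + Fl"
    by (intro tendsto_add fx_diff)
  hence "(\<lambda>k. expectation (\<lambda>\<omega>. f (xs k \<omega>))) \<longlonglongrightarrow> Fl" by simp
  thus ?thesis by (rule exI)
qed

end

theorem theorem3p1:
  fixes M :: "'a measure"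
    and f :: "'v::euclidean_space \<Rightarrow> real" and f' :: "'v \<Rightarrow> 'v"
    and L fstar mu lam G :: real
    and eta :: "nat \<Rightarrow> real"
    and x1 :: 'v
    and g :: "nat \<Rightarrow> 'a \<Rightarrow> 'v"
  assumes "prob_space M"
    and grad: "\<And>x. (f has_derivative (\<lambda>h. f' x \<bullet> h)) (at x)"
    and lip: "\<And>x y. norm (f' x - f' y) \<le> L * norm (x - y)"
    and lower: "\<And>x. fstar \<le> f x"
    and mu: "0 \<le> mu" "mu < 1"
    and lam: "0 \<le> lam" "lam \<le> 1 / (1 - mu)"
    and eta_pos: "\<And>t. t \<ge> 1 \<Longrightarrow> eta t > 0"
    and eta_div: "\<not> summable (\<lambda>t. eta (Suc t))"
    and eta_sq: "summable (\<lambda>t. (eta (Suc t))\<^sup>2)"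
    and eta_ratio: "(\<lambda>t. eta t / eta (Suc t)) \<longlonglongrightarrow> 1"
    and g_meas: "\<And>t. t \<ge> 1 \<Longrightarrow> g t \<in> borel_measurable M"
    and unbiased: "\<And>t b. t \<ge> 1 \<Longrightarrow> b \<in> Basis \<Longrightarrow>
        AE \<omega> in M. real_cond_exp M (hist M g t) (\<lambda>\<omega>. g t \<omega> \<bullet> b) \<omega>
                   = f' (sum_x mu lam eta x1 (\<lambda>i. g i \<omega>) t) \<bullet> b"
    and second_moment: "\<And>t. t \<ge> 1 \<Longrightarrow>
        (\<integral>\<^sup>+ \<omega>. ennreal ((norm (g t \<omega>))\<^sup>2) \<partial>M) \<le> ennreal (G\<^sup>2)"
  shows "(\<forall>t. integrable M (\<lambda>\<omega>. norm (f' (sum_x mu lam eta x1 (\<lambda>i. g i \<omega>) t))))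
       \<and> ((\<lambda>t. \<integral>\<omega>. norm (f' (sum_x mu lam eta x1 (\<lambda>i. g i \<omega>) t)) \<partial>M) \<longlonglongrightarrow> 0)
       \<and> (\<forall>t. integrable M (\<lambda>\<omega>. f (sum_x mu lam eta x1 (\<lambda>i. g i \<omega>) t)))
       \<and> (\<exists>Fstar::real. (\<lambda>t. \<integral>\<omega>. f (sum_x mu lam eta x1 (\<lambda>i. g i \<omega>) t) \<partial>M) \<longlonglongrightarrow> Fstar)"
proof -
  interpret S: sumloc M f f' L fstar mu lam G eta x1 g
    by (rule sumloc.intro[OF assms(1)], rule sumloc_axioms.intro)
       (fact grad lip lower mu lam eta_pos eta_div eta_sq g_meas unbiased second_moment)+
  have sx: "sum_x mu lam eta x1 (\<lambda>i. g i \<omega>) t = S.xs (t - 1) \<omega>" for \<omega> t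
    by (simp add: sum_x_def S.xs_def)
  have A: "\<forall>t. integrable M (\<lambda>\<omega>. norm (f' (sum_x mu lam eta x1 (\<lambda>i. g i \<omega>) t)))"
    unfolding sx using S.sqi_norm[OF S.f'_sqi[OF S.xs_sqi]] by simp
  have "(\<lambda>t. \<integral>\<omega>. norm (f' (S.xs (Suc t - 1) \<omega>)) \<partial>M) \<longlonglongrightarrow> 0"
    using S.ux_lim by simp
  hence B: "(\<lambda>t. \<integral>\<omega>. norm (f' (sum_x mu lam eta x1 (\<lambda>i. g i \<omega>) t)) \<partial>M) \<longlonglongrightarrow> 0"
    unfolding sx by (subst filterlim_sequentially_Suc[symmetric])
  have C: "\<forall>t. integrable M (\<lambda>\<omega>. f (sum_x mu lam eta x1 (\<lambda>i. g i \<omega>) t))"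
    unfolding sx using S.f_int[OF S.xs_sqi] by simp
  obtain Fl where "(\<lambda>k. \<integral>\<omega>. f (S.xs k \<omega>) \<partial>M) \<longlonglongrightarrow> Fl" using S.fx_lim by blast
  hence "(\<lambda>t. \<integral>\<omega>. f (S.xs (Suc t - 1) \<omega>) \<partial>M) \<longlonglongrightarrow> Fl" by simp
  hence "(\<lambda>t. \<integral>\<omega>. f (sum_x mu lam eta x1 (\<lambda>i. g i \<omega>) t) \<partial>M) \<longlonglongrightarrow> Fl"
    unfolding sx by (subst filterlim_sequentially_Suc[symmetric])
  thus ?thesis using A B C by blast
qed

end
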